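(* Consider the planted $k$-factor model with $p=\lambda/n$ and suppose $\lambda k\le 1+\epsilon$ for some $\epsilon\in(0,1)$. Let $$\beta=\max\Big\{4\log(1+\epsilon),\ \sqrt{\tfrac{8\log n}{n}}\Big\}$$ and let $\widehat H$ be any estimator that outputs a $k$-factor contained in $G$. Then, conditioned on any realization of $H^*$, $$\mathbb P\{\ell(\widehat H,H^* )\ge 2\beta\mid H^*\}\le e^{1/2}\beta\qquad\text{and}\qquad \mathbb E[\ell(\widehat H,H^* )\mid H^*]\le 6\beta.$$
   Context: Planted $k$-factor model: fix an integer $k\ge1$ and $n$ with $kn$ even. A $k$-factor on $[n]$ is a $k$-regular simple graph with vertex set $[n]$, identified with its edge set; $\mathcal H$ is the set of all $k$-factors on $[n]$. Let $p=\lambda/n\in[0,1]$. Draw $H^*$ uniformly at random from $\mathcal H$ and, independently, $G_0\sim\mathcal G(n,p)$ (each of the $\binom n2$ vertex pairs is an edge independently with probability $p$). The observed graph is $G=G_0\cup H^*$. An estimator is a function $\widehat H=\widehat H(G)$ taking values in sets of edges of the complete graph on $[n]$. The reconstruction error is $\ell(H^*,\widehat H)=\ell(\widehat H,H^* )=|H^*\triangle\widehat H|/|H^*|$, where $|H^*|=kn/2$. *)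

theory Defs
  imports "HOL-Probability.Probability"
begin

text \<open>Vertex set [n] = {1..n}; an edge is a 2-element set of vertices;
  a graph is identified with its edge set.\<close>

definition all_pairs :: "nat \<Rightarrow> nat set set" where
  "all_pairs n = {e. \<exists>u v. e = {u, v} \<and> u \<noteq> v \<and> u \<in> {1..n} \<and> v \<in> {1..n}}"

definition is_k_factor :: "nat \<Rightarrow> nat \<Rightarrow> nat set set \<Rightarrow> bool" where
  "is_k_factor n k H \<longleftrightarrow> H \<subseteq> all_pairs n \<and> (\<forall>v\<in>{1..n}. card {e\<in>H. v \<in> e} = k)"

definition k_factors :: "nat \<Rightarrow> nat \<Rightarrow> nat set set set" where
  "k_factors n k = {H. is_k_factor n k H}"

definition gnp :: "nat \<Rightarrow> real \<Rightarrow> nat set set pmf" where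
  "gnp n p = map_pmf (\<lambda>f. {e \<in> all_pairs n. f e})
              (Pi_pmf (all_pairs n) False (\<lambda>_. bernoulli_pmf p))"

definition recon_loss :: "nat set set \<Rightarrow> nat set set \<Rightarrow> real" where
  "recon_loss Hs H' = real (card (sym_diff Hs H')) / real (card Hs)"

end

theory Submission
  imports Defs "HOL-Analysis.Harmonic_Numbers"
begin

lemma card_filter_sum: "finite E \<Longrightarrow> card {e\<in>E. P e} = (\<Sum>e\<in>E. if P e then 1 else 0::nat)"
  by (simp add: sum.If_cases Int_def)

lemma handshake:
  assumes fV: "finite V" and E: "E \<subseteq> {e. \<exists>u v. e = {u,v} \<and> u \<noteq> v \<and> u \<in> V \<and> v \<in> V}"
  shows "(\<Sum>v\<in>V. card {e\<in>E. v \<in> e}) = 2 * card E"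
proof -
  have "E \<subseteq> Pow V" using E by auto
  hence fE: "finite E" using fV finite_subset by blast
  have "(\<Sum>v\<in>V. card {e\<in>E. v \<in> e}) = (\<Sum>v\<in>V. \<Sum>e\<in>E. if v \<in> e then 1 else 0::nat)"
    using fE by (simp add: card_filter_sum)
  also have "\<dots> = (\<Sum>e\<in>E. \<Sum>v\<in>V. if v \<in> e then 1 else 0::nat)"
    by (rule sum.swap)
  also have "\<dots> = (\<Sum>e\<in>E. 2)"
  proof (rule sum.cong[OF refl])
    fix e assume "e \<in> E"
    then obtain u v where e: "e = {u,v}" "u \<noteq> v" "u \<in> V" "v \<in> V" using E by blast
    have "(\<Sum>w\<in>V. if w \<in> e then 1 else 0::nat) = card {w\<in>V. w \<in> e}"
      using fV by (simp add: card_filter_sum)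
    also have "{w\<in>V. w \<in> e} = {u,v}" using e by auto
    finally show "(\<Sum>w\<in>V. if w \<in> e then 1 else 0::nat) = 2" using e by simp
  qed
  finally show ?thesis by simp
qed

lemma all_pairs_sub: "all_pairs n \<subseteq> Pow {1..n}"
  unfolding all_pairs_def by auto

lemma finite_all_pairs: "finite (all_pairs n)"
  using all_pairs_sub finite_subset by (metis finite_Pow_iff finite_atLeastAtMost)

lemma kf_card:
  assumes "is_k_factor n k H"
  shows "2 * card H = k * n"
proof -
  have H: "H \<subseteq> all_pairs n" using assms unfolding is_k_factor_def by auto
  have "2 * card H = (\<Sum>v\<in>{1..n}. card {e\<in>H. v \<in> e})"
    by (rule handshake[symmetric]) (use H in \<open>auto simp: all_pairs_def\<close>)
  also have "\<dots> = (\<Sum>v\<in>{1..n}. k)" using assms unfolding is_k_factor_def by simp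
  finally show ?thesis by simp
qed

lemma kf_deg_eq:
  assumes H: "is_k_factor n k H" and Hs: "is_k_factor n k Hs"
  shows "card {e\<in>H - Hs. v \<in> e} = card {e\<in>Hs - H. v \<in> e}"
proof (cases "v \<in> {1..n}")
  case True
  have fH: "finite H" "finite Hs" using H Hs finite_all_pairs finite_subset
    unfolding is_k_factor_def by blast+
  have "{e\<in>H. v \<in> e} = {e\<in>H \<inter> Hs. v \<in> e} \<union> {e\<in>H - Hs. v \<in> e}" by auto
  hence 1: "card {e\<in>H. v \<in> e} = card {e\<in>H \<inter> Hs. v \<in> e} + card {e\<in>H - Hs. v \<in> e}"
    using fH by (simp add: card_Un_disjoint disjoint_iff)
  have "{e\<in>Hs. v \<in> e} = {e\<in>H \<inter> Hs. v \<in> e} \<union> {e\<in>Hs - H. v \<in> e}" by auto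
  hence 2: "card {e\<in>Hs. v \<in> e} = card {e\<in>H \<inter> Hs. v \<in> e} + card {e\<in>Hs - H. v \<in> e}"
    using fH by (simp add: card_Un_disjoint disjoint_iff)
  show ?thesis using 1 2 True H Hs unfolding is_k_factor_def by simp
next
  case False
  have "{e\<in>H - Hs. v \<in> e} = {}" "{e\<in>Hs - H. v \<in> e} = {}"
    using False H Hs all_pairs_sub unfolding is_k_factor_def by blast+
  thus ?thesis by (simp only: card.empty)
qed

lemma kf_card_diff:
  assumes H: "is_k_factor n k H" and Hs: "is_k_factor n k Hs"
  shows "card (H - Hs) = card (Hs - H)"
proof -
  have s: "H \<subseteq> all_pairs n" "Hs \<subseteq> all_pairs n" using H Hs unfolding is_k_factor_def by auto
  have "2 * card (H - Hs) = (\<Sum>v\<in>{1..n}. card {e\<in>H - Hs. v \<in> e})"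
    by (rule handshake[symmetric]) (use s in \<open>auto simp: all_pairs_def\<close>)
  also have "\<dots> = (\<Sum>v\<in>{1..n}. card {e\<in>Hs - H. v \<in> e})"
    using kf_deg_eq[OF H Hs] by simp
  also have "\<dots> = 2 * card (Hs - H)"
    by (rule handshake) (use s in \<open>auto simp: all_pairs_def\<close>)
  finally show ?thesis by simp
qed

definition pairings :: "'a set \<Rightarrow> 'a set set set" where
  "pairings S = {P. (\<forall>p\<in>P. \<exists>x y. p = {x,y} \<and> x \<noteq> y) \<and> (\<forall>p\<in>P. \<forall>q\<in>P. p \<noteq> q \<longrightarrow> p \<inter> q = {}) \<and> \<Union>P = S}"

fun dfact :: "nat \<Rightarrow> nat" where
  "dfact 0 = 1"
| "dfact (Suc m) = (2*m+1) * dfact m"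

lemma finite_pairings: "finite S \<Longrightarrow> finite (pairings S)"
  by (rule finite_subset[of _ "Pow (Pow S)"]) (auto simp: pairings_def)

lemma card_pairings: "finite S \<Longrightarrow> card S = 2*m \<Longrightarrow> card (pairings S) \<le> dfact m"
proof (induction m arbitrary: S)
  case 0
  hence "S = {}" by auto
  hence "pairings S \<subseteq> {{}}" by (auto simp: pairings_def)
  hence "card (pairings S) \<le> card {{}::'a set set}" by (intro card_mono) auto
  thus ?case by simp
next
  case (Suc m)
  have "S \<noteq> {}" using Suc.prems by auto
  then obtain x where x: "x \<in> S" by blast
  define T where "T = (SIGMA y:S - {x}. pairings (S - {x,y}))"
  have ex: "\<exists>yQ. yQ \<in> T \<and> P = insert {x, fst yQ} (snd yQ)" if P: "P \<in> pairings S" for P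
  proof -
    have P1: "\<forall>p\<in>P. \<exists>x y. p = {x,y} \<and> x \<noteq> y" and P2: "\<forall>p\<in>P. \<forall>q\<in>P. p \<noteq> q \<longrightarrow> p \<inter> q = {}"
      and P3: "\<Union>P = S" using P by (auto simp: pairings_def)
    obtain p where p: "p \<in> P" "x \<in> p" using P3 x by auto
    obtain u w where uw: "p = {u,w}" "u \<noteq> w" using P1 p by blast
    obtain y where y: "p = {x,y}" "x \<noteq> y" using uw p by auto
    have yS: "y \<in> S - {x}" using y p P3 by auto
    have Q: "P - {p} \<in> pairings (S - {x,y})"
      unfolding pairings_def
    proof (intro CollectI conjI)
      show "\<forall>q\<in>P - {p}. \<exists>a b. q = {a,b} \<and> a \<noteq> b" using P1 by auto
      show "\<forall>q\<in>P - {p}. \<forall>r\<in>P - {p}. q \<noteq> r \<longrightarrow> q \<inter> r = {}" using P2 by auto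
      show "\<Union>(P - {p}) = S - {x,y}"
      proof
        show "\<Union>(P - {p}) \<subseteq> S - {x, y}"
        proof
          fix z assume "z \<in> \<Union>(P - {p})"
          then obtain q where q: "q \<in> P" "q \<noteq> p" "z \<in> q" by auto
          have "q \<inter> p = {}" using P2 q p by blast
          thus "z \<in> S - {x,y}" using q P3 y by auto
        qed
        show "S - {x, y} \<subseteq> \<Union>(P - {p})" using P3 y by auto
      qed
    qed
    show ?thesis
      by (rule exI[of _ "(y, P - {p})"]) (use yS Q p y in \<open>auto simp: T_def\<close>)
  qed
  define f where "f P = (SOME yQ. yQ \<in> T \<and> P = insert {x, fst yQ} (snd yQ))" for P
  have f: "f P \<in> T \<and> P = insert {x, fst (f P)} (snd (f P))" if "P \<in> pairings S" for P
    unfolding f_def by (rule someI_ex) (rule ex[OF that])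
  have inj: "inj_on f (pairings S)"
    by (rule inj_onI) (metis f)
  have fT: "finite T" unfolding T_def using Suc.prems by (auto intro!: finite_pairings)
  have "card (pairings S) \<le> card T"
    by (rule card_inj_on_le[OF inj _ fT]) (use f in blast)
  also have "card T = (\<Sum>y\<in>S - {x}. card (pairings (S - {x,y})))"
    unfolding T_def using Suc.prems by (intro card_SigmaI) (auto intro!: finite_pairings)
  also have "\<dots> \<le> (\<Sum>y\<in>S - {x}. dfact m)"
  proof (rule sum_mono)
    fix y assume y: "y \<in> S - {x}"
    have "card (S - {x,y}) = 2*m" using Suc.prems y x
      by (subst card_Diff_subset) auto
    thus "card (pairings (S - {x,y})) \<le> dfact m" using Suc.IH Suc.prems by simp
  qed
  also have "\<dots> = (2*m+1) * dfact m" using Suc.prems x by simp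
  finally show ?case by simp
qed

definition VR :: "nat \<Rightarrow> nat set set \<Rightarrow> nat set set set" where
  "VR n B = {R. R \<subseteq> all_pairs n \<and> (\<forall>v. card {e\<in>R. v \<in> e} = card {e\<in>B. v \<in> e})}"

lemma finite_VR: "finite (VR n B)"
  by (rule finite_subset[of _ "Pow (all_pairs n)"]) (auto simp: VR_def finite_all_pairs)

lemma card_VR:
  assumes B: "B \<subseteq> all_pairs n" and cB: "card B = m"
  shows "card (VR n B) \<le> dfact m"
proof -
  define S where "S = (SIGMA b:B. b)"
  have fB: "finite B" using B finite_all_pairs finite_subset by blast
  have fb: "\<forall>b\<in>B. finite b \<and> card b = 2"
  proof
    fix b assume "b \<in> B"
    then obtain u v where "b = {u,v}" "u \<noteq> v" using B unfolding all_pairs_def by blast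
    thus "finite b \<and> card b = 2" by auto
  qed
  have fS: "finite S" unfolding S_def using fB fb by auto
  have "card S = (\<Sum>b\<in>B. card b)" unfolding S_def using fB fb by (intro card_SigmaI) auto
  also have "\<dots> = (\<Sum>b\<in>B. 2)" using fb by (intro sum.cong) auto
  finally have cS: "card S = 2*m" using cB by simp
  have stub_card: "card {s\<in>S. snd s = v} = card {e\<in>B. v \<in> e}" for v
  proof -
    have "{s\<in>S. snd s = v} = (\<lambda>b. (b,v)) ` {e\<in>B. v \<in> e}" unfolding S_def by auto
    moreover have "inj_on (\<lambda>b. (b,v)) {e\<in>B. v \<in> e}" by (auto simp: inj_on_def)
    ultimately show ?thesis by (simp add: card_image)
  qed
  have exs: "\<exists>\<sigma>. \<forall>v. bij_betw (\<sigma> v) {e\<in>R. v \<in> e} {s\<in>S. snd s = v}" if R: "R \<in> VR n B" for R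
  proof -
    have fR: "finite R" using R finite_all_pairs finite_subset unfolding VR_def by blast
    have "\<forall>v. \<exists>h. bij_betw h {e\<in>R. v \<in> e} {s\<in>S. snd s = v}"
    proof
      fix v
      show "\<exists>h. bij_betw h {e\<in>R. v \<in> e} {s\<in>S. snd s = v}"
      proof (rule finite_same_card_bij)
        show "finite {e\<in>R. v \<in> e}" using fR by simp
        show "finite {s\<in>S. snd s = v}" using fS by simp
        have "card {e\<in>R. v \<in> e} = card {e\<in>B. v \<in> e}" using R unfolding VR_def by blast
        thus "card {e\<in>R. v \<in> e} = card {s\<in>S. snd s = v}" using stub_card[of v] by simp
      qed
    qed
    thus ?thesis by (rule choice)
  qed
  define \<sigma> where "\<sigma> R = (SOME \<sigma>. \<forall>v. bij_betw (\<sigma> v) {e\<in>R. v \<in> e} {s\<in>S. snd s = v})" for R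
  have \<sigma>: "bij_betw (\<sigma> R v) {e\<in>R. v \<in> e} {s\<in>S. snd s = v}" if "R \<in> VR n B" for R v
    unfolding \<sigma>_def using someI_ex[OF exs[OF that]] by blast
  define F where "F R = (\<lambda>e. (\<lambda>v. \<sigma> R v e) ` e) ` R" for R
  have snd_img: "snd ` ((\<lambda>v. \<sigma> R v e) ` e) = e" if R: "R \<in> VR n B" and e: "e \<in> R" for R e
  proof -
    have *: "snd (\<sigma> R v e) = v" if "v \<in> e" for v
      using \<sigma>[OF R, of v] e that unfolding bij_betw_def by auto
    have "snd ` ((\<lambda>v. \<sigma> R v e) ` e) = (\<lambda>v. snd (\<sigma> R v e)) ` e"
      by (simp only: image_comp o_def)
    also have "\<dots> = (\<lambda>v. v) ` e" by (rule image_cong[OF refl]) (use * in blast)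
    finally show ?thesis by simp
  qed
  have GF: "(\<lambda>p. snd ` p) ` F R = R" if R: "R \<in> VR n B" for R
  proof -
    have "(\<lambda>p. snd ` p) ` F R = (\<lambda>e. snd ` ((\<lambda>v. \<sigma> R v e) ` e)) ` R"
      unfolding F_def by (simp only: image_comp o_def)
    also have "\<dots> = (\<lambda>e. e) ` R" by (rule image_cong[OF refl]) (use snd_img[OF R] in blast)
    finally show ?thesis by simp
  qed
  have inj: "inj_on F (VR n B)"
  proof (rule inj_onI)
    fix R1 R2 assume R12: "R1 \<in> VR n B" "R2 \<in> VR n B" "F R1 = F R2"
    have "R1 = (\<lambda>p. snd ` p) ` F R1" using GF[OF R12(1)] by (rule sym)
    also have "\<dots> = (\<lambda>p. snd ` p) ` F R2" using R12(3) by (rule arg_cong)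
    also have "\<dots> = R2" by (rule GF[OF R12(2)])
    finally show "R1 = R2" .
  qed
  have img: "F R \<in> pairings S" if R: "R \<in> VR n B" for R
  proof -
    have RA: "R \<subseteq> all_pairs n" using R unfolding VR_def by auto
    have in_stub: "\<sigma> R v e \<in> S \<and> snd (\<sigma> R v e) = v" if "e \<in> R" "v \<in> e" for e v
    proof -
      have "\<sigma> R v e \<in> {s\<in>S. snd s = v}" using bij_betwE[OF \<sigma>[OF R, of v]] that by blast
      thus ?thesis by blast
    qed
    show ?thesis unfolding pairings_def
    proof (intro CollectI conjI)
      show "\<forall>p\<in>F R. \<exists>x y. p = {x, y} \<and> x \<noteq> y"
      proof
        fix p assume "p \<in> F R"
        then obtain e where e: "e \<in> R" "p = (\<lambda>v. \<sigma> R v e) ` e" unfolding F_def by auto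
        then obtain u w where uw: "e = {u,w}" "u \<noteq> w" using RA unfolding all_pairs_def by blast
        have "snd (\<sigma> R u e) = u" "snd (\<sigma> R w e) = w" using in_stub[OF e(1), of u] in_stub[OF e(1), of w] uw by auto
        hence "\<sigma> R u e \<noteq> \<sigma> R w e" using uw(2) by force
        moreover have "p = {\<sigma> R u e, \<sigma> R w e}" using e(2) uw(1) by simp
        ultimately show "\<exists>x y. p = {x, y} \<and> x \<noteq> y" by blast
      qed
      show "\<forall>p\<in>F R. \<forall>q\<in>F R. p \<noteq> q \<longrightarrow> p \<inter> q = {}"
      proof (intro ballI impI)
        fix p q assume p: "p \<in> F R" and q: "q \<in> F R" and pq: "p \<noteq> q"
        obtain e where e: "e \<in> R" "p = (\<lambda>v. \<sigma> R v e) ` e" using p unfolding F_def by auto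
        obtain e' where e': "e' \<in> R" "q = (\<lambda>v. \<sigma> R v e') ` e'" using q unfolding F_def by auto
        show "p \<inter> q = {}"
        proof (rule ccontr)
          assume "p \<inter> q \<noteq> {}"
          then obtain t where t: "t \<in> p" "t \<in> q" by blast
          obtain x where x: "x \<in> e" "t = \<sigma> R x e" using t(1) e(2) by blast
          obtain y where y: "y \<in> e'" "t = \<sigma> R y e'" using t(2) e'(2) by blast
          have xy: "x \<in> e" "y \<in> e'" "\<sigma> R x e = \<sigma> R y e'" using x y by auto
          have "snd (\<sigma> R x e) = x" using in_stub[OF e(1) xy(1)] by blast
          moreover have "snd (\<sigma> R y e') = y" using in_stub[OF e'(1) xy(2)] by blast
          ultimately have "x = y" using xy(3) by simp
          have "inj_on (\<sigma> R x) {e\<in>R. x \<in> e}" using \<sigma>[OF R, of x] unfolding bij_betw_def by blast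
          moreover have "\<sigma> R x e = \<sigma> R x e'" using xy(3) \<open>x = y\<close> by simp
          ultimately have "e = e'" by (rule inj_onD) (use xy e e' \<open>x = y\<close> in auto)
          thus False using pq e e' by simp
        qed
      qed
      show "\<Union> (F R) = S"
      proof
        show "\<Union> (F R) \<subseteq> S"
        proof
          fix s assume "s \<in> \<Union> (F R)"
          then obtain e v where "e \<in> R" "v \<in> e" "s = \<sigma> R v e" unfolding F_def by blast
          thus "s \<in> S" using in_stub by blast
        qed
        show "S \<subseteq> \<Union> (F R)"
        proof
          fix s assume s: "s \<in> S"
          have "\<sigma> R (snd s) ` {e\<in>R. snd s \<in> e} = {t\<in>S. snd t = snd s}"
            using \<sigma>[OF R, of "snd s"] unfolding bij_betw_def by blast
          hence "s \<in> \<sigma> R (snd s) ` {e\<in>R. snd s \<in> e}" using s by blast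
          then obtain e where "e \<in> R" "snd s \<in> e" "s = \<sigma> R (snd s) e" by auto
          thus "s \<in> \<Union> (F R)" unfolding F_def by blast
        qed
      qed
    qed
  qed
  have "card (VR n B) \<le> card (pairings S)"
    by (rule card_inj_on_le[OF inj]) (use img finite_pairings[OF fS] in auto)
  also have "\<dots> \<le> dfact m" by (rule card_pairings[OF fS cS])
  finally show ?thesis .
qed

lemma card_KF:
  assumes Hs: "is_k_factor n k Hs"
  shows "card {H\<in>k_factors n k. card (H - Hs) = m} \<le> (card Hs choose m) * dfact m"
proof -
  define T where "T = (SIGMA B:{B. B \<subseteq> Hs \<and> card B = m}. VR n B)"
  have HsA: "Hs \<subseteq> all_pairs n" using Hs unfolding is_k_factor_def by auto
  have fHs: "finite Hs" using HsA finite_all_pairs finite_subset by blast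
  have fT: "finite T" unfolding T_def using fHs by (auto intro!: finite_VR)
  have inj: "inj_on (\<lambda>H. (Hs - H, H - Hs)) {H\<in>k_factors n k. card (H - Hs) = m}"
    by (rule inj_onI) (simp, blast)
  have img: "(\<lambda>H. (Hs - H, H - Hs)) ` {H\<in>k_factors n k. card (H - Hs) = m} \<subseteq> T"
  proof
    fix x assume "x \<in> (\<lambda>H. (Hs - H, H - Hs)) ` {H\<in>k_factors n k. card (H - Hs) = m}"
    then obtain H where H: "is_k_factor n k H" "card (H - Hs) = m" "x = (Hs - H, H - Hs)"
      unfolding k_factors_def by auto
    have "card (Hs - H) = m" using kf_card_diff[OF H(1) Hs] H by simp
    moreover have "H - Hs \<in> VR n (Hs - H)"
      using H(1) kf_deg_eq[OF H(1) Hs] unfolding VR_def is_k_factor_def by auto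
    ultimately show "x \<in> T" unfolding T_def using H by auto
  qed
  have "card {H\<in>k_factors n k. card (H - Hs) = m} \<le> card T"
    by (rule card_inj_on_le[OF inj img fT])
  also have "card T = (\<Sum>B\<in>{B. B \<subseteq> Hs \<and> card B = m}. card (VR n B))"
    unfolding T_def using fHs by (intro card_SigmaI) (auto intro!: finite_VR)
  also have "\<dots> \<le> (\<Sum>B\<in>{B. B \<subseteq> Hs \<and> card B = m}. dfact m)"
    by (rule sum_mono) (use HsA card_VR in blast)
  also have "\<dots> = (card Hs choose m) * dfact m" using n_subsets[OF fHs] by simp
  finally show ?thesis .
qed

lemma dfact_le: "dfact m \<le> 2^m * fact m"
proof (induction m)
  case 0 thus ?case by simp
next
  case (Suc m)
  have "dfact (Suc m) = (2*m+1) * dfact m" by simp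
  also have "\<dots> \<le> (2*m+2) * (2^m * fact m)" using Suc by (intro mult_mono) auto
  also have "\<dots> = 2^Suc m * fact (Suc m)" by (simp add: algebra_simps)
  finally show ?case .
qed

lemma choose_fact_nat: "(a choose Suc m) * Suc m = (a choose m) * (a - m)"
  using binomial_absorption[of m a] binomial_absorb_comp[of a m] by (simp add: mult.commute)

lemma choose_fact: "real (a choose m) * fact m = (\<Prod>i<m. real (a - i))"
proof (induction m)
  case 0 thus ?case by simp
next
  case (Suc m)
  have "real (a choose Suc m) * fact (Suc m) = real ((a choose Suc m) * Suc m) * fact m"
    by (simp add: algebra_simps)
  also have "\<dots> = real (a choose m) * fact m * real (a - m)"
    by (subst choose_fact_nat) (simp only: of_nat_mult mult_ac)
  also have "\<dots> = (\<Prod>i<Suc m. real (a - i))" using Suc by simp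
  finally show ?case .
qed

lemma prod_bound:
  fixes q :: real and a :: nat
  assumes a: "0 < a" and q: "0 \<le> q"
  shows "(\<Prod>i<m. real (a - i) * q) \<le> (real a * q)^m * exp (-(real m * (real m - 1)) / (2 * real a))"
proof (induction m)
  case 0 thus ?case by simp
next
  case (Suc m)
  have fac: "real (a - m) * q \<le> real a * q * exp (- real m / real a)"
  proof (cases "m \<le> a")
    case True
    have "real (a - m) = real a * (1 - real m / real a)" using True a by (simp add: field_simps of_nat_diff)
    also have "\<dots> \<le> real a * exp (- real m / real a)"
      using exp_ge_add_one_self[of "- real m / real a"] by (intro mult_left_mono) auto
    finally have "real (a - m) * q \<le> (real a * exp (- real m / real a)) * q" by (rule mult_right_mono[OF _ q])
    thus ?thesis by (simp only: mult_ac)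
  next
    case False
    hence "a - m = 0" by simp
    thus ?thesis using q by simp
  qed
  have nn: "0 \<le> real (a - m) * q" using q by simp
  have "(\<Prod>i<Suc m. real (a - i) * q) = (\<Prod>i<m. real (a - i) * q) * (real (a - m) * q)" by simp
  also have "\<dots> \<le> ((real a * q)^m * exp (-(real m * (real m - 1)) / (2 * real a))) * (real a * q * exp (- real m / real a))"
    by (rule mult_mono[OF Suc fac _ nn]) (use q in auto)
  also have "\<dots> = (real a * q)^Suc m * (exp (-(real m * (real m - 1)) / (2 * real a)) * exp (- real m / real a))"
    by (simp add: algebra_simps)
  also have "exp (-(real m * (real m - 1)) / (2 * real a)) * exp (- real m / real a)
       = exp (-(real (Suc m) * (real (Suc m) - 1)) / (2 * real a))"
    unfolding exp_add[symmetric] using a by (simp add: field_simps)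
  finally show ?case .
qed

lemma term_bound:
  fixes p :: real and a :: nat
  assumes a: "0 < a" and p: "0 \<le> p"
  shows "real (a choose m) * real (dfact m) * p^m \<le> (2 * real a * p)^m * exp (-(real m * (real m - 1)) / (2 * real a))"
proof -
  have "real (a choose m) * real (dfact m) * p^m \<le> real (a choose m) * (2^m * fact m) * p^m"
  proof -
    have "real (dfact m) \<le> real (2^m * fact m)" using dfact_le[of m] by (simp only: of_nat_le_iff)
    hence "real (dfact m) \<le> 2^m * fact m" by simp
    thus ?thesis using p by (intro mult_right_mono mult_left_mono) auto
  qed
  also have "\<dots> = (real (a choose m) * fact m) * (2 * p)^m" by (simp add: algebra_simps power_mult_distrib)
  also have "\<dots> = (\<Prod>i<m. real (a - i) * (2 * p))"
    by (simp add: choose_fact prod.distrib)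
  also have "\<dots> \<le> (real a * (2 * p))^m * exp (-(real m * (real m - 1)) / (2 * real a))"
    by (rule prod_bound) (use a p in auto)
  finally show ?thesis by (simp add: algebra_simps)
qed

lemma sum_bound:
  fixes a k n :: nat and p eps \<beta> :: real
  assumes n2: "n \<ge> 2" and k: "k \<ge> 1" and a: "2*a = k*n" and p: "0 \<le> p"
    and c: "2 * real a * p \<le> 1 + eps" and eps: "0 < eps"
    and b1: "4 * ln (1 + eps) \<le> \<beta>" and b2: "sqrt (8 * ln (real n) / real n) \<le> \<beta>" and b3: "\<beta> < 1"
  shows "(\<Sum>m\<in>{m. m \<le> a \<and> \<beta> * real a \<le> real m}. real (a choose m) * real (dfact m) * p^m) \<le> exp (1/2) * \<beta>"
proof -
  have lpos: "0 < ln (1 + eps)" using eps by simp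
  have bpos: "0 < \<beta>" using b1 lpos by linarith
  have apos: "0 < a" using a n2 k by (metis gr0I mult_is_0 not_one_le_zero zero_neq_numeral le_0_eq)
  have ra: "real (2*a) = real k * real n" using a by (metis of_nat_mult)
  define r where "r = exp (- \<beta> / 4)"
  have r0: "0 < r" "r < 1" unfolding r_def using bpos by auto
  define M0 where "M0 = nat \<lceil>\<beta> * real a\<rceil>"
  have M0: "\<beta> * real a \<le> real M0" unfolding M0_def by linarith
  have tm: "real (a choose m) * real (dfact m) * p^m \<le> exp (1/2) * r^m"
    if m: "m \<le> a" "\<beta> * real a \<le> real m" for m
  proof -
    define E where "E = exp (-(real m * (real m - 1)) / (2 * real a))"
    have E0: "0 \<le> E" unfolding E_def by simp
    have "real (a choose m) * real (dfact m) * p^m \<le> (2 * real a * p)^m * E"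
      unfolding E_def by (rule term_bound[OF apos p])
    also have "\<dots> \<le> (1 + eps)^m * E"
      by (rule mult_right_mono[OF power_mono[OF c] E0]) (use p in simp)
    also have "(1 + eps)^m = exp (real m * ln (1 + eps))"
      using eps by (simp add: exp_of_nat_mult)
    also have "\<dots> \<le> exp (real m * \<beta> / 4)"
    proof -
      have "real m * (4 * ln (1 + eps)) \<le> real m * \<beta>" by (rule mult_left_mono[OF b1]) simp
      hence "real m * ln (1 + eps) \<le> real m * \<beta> / 4" by linarith
      thus ?thesis by simp
    qed
    also have "E \<le> exp (1/2 - real m * \<beta> / 2)"
    proof -
      have "real m * (\<beta> * real a) \<le> real m * real m" using m(2) by (simp add: mult_left_mono)
      moreover have "real m \<le> real a" using m(1) by simp
      ultimately have "real m * \<beta> * real a - real a \<le> real m * (real m - 1)" by (simp add: algebra_simps)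
      hence "-(real m * (real m - 1)) / (2 * real a) \<le> 1/2 - real m * \<beta> / 2"
        using apos by (simp add: field_simps)
      thus ?thesis unfolding E_def by simp
    qed
    hence "exp (real m * \<beta> / 4) * E \<le> exp (real m * \<beta> / 4) * exp (1/2 - real m * \<beta> / 2)"
      by (simp add: mult_left_mono)
    also have "\<dots> = exp (1/2) * exp (real m * (- \<beta> / 4))" unfolding exp_add[symmetric] by (simp add: algebra_simps)
    also have "\<dots> = exp (1/2) * r^m" unfolding r_def by (simp only: exp_of_nat_mult)
    finally show ?thesis using E0 by (simp add: mult_right_mono)
  qed
  have "(\<Sum>m\<in>{m. m \<le> a \<and> \<beta> * real a \<le> real m}. real (a choose m) * real (dfact m) * p^m)
      \<le> (\<Sum>m\<in>{m. m \<le> a \<and> \<beta> * real a \<le> real m}. exp (1/2) * r^m)"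
    by (rule sum_mono) (use tm in auto)
  also have "\<dots> \<le> (\<Sum>m\<in>{M0..a}. exp (1/2) * r^m)"
  proof (rule sum_mono2)
    show "finite {M0..a}" by simp
    show "{m. m \<le> a \<and> \<beta> * real a \<le> real m} \<subseteq> {M0..a}"
    proof
      fix m assume "m \<in> {m. m \<le> a \<and> \<beta> * real a \<le> real m}"
      hence "m \<le> a" "\<beta> * real a \<le> real m" by auto
      hence "M0 \<le> m" unfolding M0_def by (simp add: ceiling_le_iff nat_le_iff)
      thus "m \<in> {M0..a}" using \<open>m \<le> a\<close> by simp
    qed
    show "\<And>b. b \<in> {M0..a} - {m. m \<le> a \<and> \<beta> * real a \<le> real m} \<Longrightarrow> 0 \<le> exp (1 / 2) * r ^ b"
      using r0 by simp
  qed
  also have "\<dots> = exp (1/2) * (\<Sum>m=M0..a. r^m)" by (simp add: sum_distrib_left)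
  also have "(\<Sum>m=M0..a. r^m) \<le> r^M0 / (1 - r)"
  proof -
    have "(\<Sum>m=M0..a. r^m) = (if a < M0 then 0 else (r^M0 - r^Suc a) / (1 - r))"
      using r0 by (simp add: sum_gp)
    also have "\<dots> \<le> r^M0 / (1 - r)" using r0 by (auto intro!: divide_right_mono)
    finally show ?thesis .
  qed
  also have "r^M0 \<le> 1 / real n"
  proof -
    have x0: "0 \<le> 8 * ln (real n) / real n" using n2 by simp
    have sq: "8 * ln (real n) / real n \<le> \<beta>^2"
      using b2 x0 by (metis real_sqrt_le_iff real_sqrt_pow2 power2_eq_square sqrt_le_D)
    hence "8 * ln (real n) \<le> \<beta>^2 * real n" using n2 by (simp add: field_simps)
    moreover have "\<beta>^2 * real n \<le> \<beta>^2 * (real k * real n)"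
    proof -
      have "1 * real n \<le> real k * real n" by (rule mult_right_mono) (use k in auto)
      thus ?thesis by (intro mult_left_mono) auto
    qed
    moreover have "\<beta>^2 * (real k * real n) = 2 * (\<beta> * (\<beta> * real a))"
      using ra by (simp add: power2_eq_square)
    ultimately have "ln (real n) \<le> \<beta> * (\<beta> * real a) / 4" by linarith
    also have "\<dots> \<le> \<beta> * real M0 / 4" using M0 bpos by (simp add: mult_left_mono)
    finally have "exp (ln (real n)) \<le> exp (\<beta> * real M0 / 4)" by simp
    hence "real n \<le> exp (\<beta> * real M0 / 4)" using n2 by simp
    moreover have "r^M0 = 1 / exp (\<beta> * real M0 / 4)"
      unfolding r_def by (simp add: exp_of_nat_mult[symmetric] exp_minus field_simps)
    ultimately show ?thesis using n2 by (simp add: frac_le)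
  qed
  hence "r^M0 / (1 - r) \<le> (1 / real n) / (1 - r)" using r0 by (intro divide_right_mono) auto
  also have "\<dots> \<le> \<beta>"
  proof -
    have "1 + \<beta>/4 \<le> exp (\<beta>/4)" by (rule exp_ge_add_one_self)
    hence "r \<le> 1 / (1 + \<beta>/4)" unfolding r_def using bpos by (simp add: exp_minus field_simps)
    hence r1: "\<beta> / (4 + \<beta>) \<le> 1 - r" using bpos by (simp add: field_simps)
    have x0: "0 \<le> 8 * ln (real n) / real n" using n2 by simp
    have sq: "8 * ln (real n) / real n \<le> \<beta>^2"
      using b2 x0 by (metis real_sqrt_le_iff real_sqrt_pow2 power2_eq_square sqrt_le_D)
    hence "8 * ln (real n) \<le> \<beta>^2 * real n" using n2 by (simp add: field_simps)
    moreover have "ln 2 \<le> ln (real n)" using n2 by simp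
    moreover have "2/3 \<le> ln (2::real)" by (rule ln2_ge_two_thirds)
    ultimately have bn: "4 + \<beta> \<le> \<beta>^2 * real n" using b3 by linarith
    have "(1 / real n) / (1 - r) \<le> (1 / real n) / (\<beta> / (4 + \<beta>))"
    proof (rule divide_left_mono[OF r1])
      have "0 < \<beta> / (4 + \<beta>)" using bpos by simp
      moreover have "0 < 1 - r" using r0 by simp
      ultimately show "0 < (1 - r) * (\<beta> / (4 + \<beta>))" by (rule mult_pos_pos[rotated])
    qed simp
    also have "\<dots> = (4 + \<beta>) / (\<beta> * real n)" using bpos by (simp add: field_simps)
    also have "\<dots> \<le> \<beta>" using bn bpos n2 by (simp add: field_simps power2_eq_square)
    finally show ?thesis .
  qed
  finally show ?thesis using r0 by (simp add: mult_left_mono)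
qed

lemma prob_subset:
  assumes R: "R \<subseteq> all_pairs n" and p: "0 \<le> p" "p \<le> 1"
  shows "measure_pmf.prob (gnp n p) {G. R \<subseteq> G} = p ^ card R"
proof -
  define A where "A = all_pairs n"
  have fA: "finite A" unfolding A_def by (rule finite_all_pairs)
  have pre: "(\<lambda>f. {e \<in> A. f e}) -` {G. R \<subseteq> G} = Pi A (\<lambda>e. if e \<in> R then {True} else UNIV)"
    using R unfolding A_def Pi_def by auto
  have "measure_pmf.prob (gnp n p) {G. R \<subseteq> G}
      = measure_pmf.prob (Pi_pmf A False (\<lambda>_. bernoulli_pmf p)) (Pi A (\<lambda>e. if e \<in> R then {True} else UNIV))"
    unfolding gnp_def A_def[symmetric] by (simp only: measure_map_pmf pre)
  also have "\<dots> = (\<Prod>e\<in>A. measure_pmf.prob (bernoulli_pmf p) (if e \<in> R then {True} else UNIV))"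
    by (rule measure_Pi_pmf_Pi[OF fA])
  also have "\<dots> = (\<Prod>e\<in>A. if e \<in> R then p else 1)"
    by (rule prod.cong[OF refl]) (use p in \<open>simp add: measure_pmf_single\<close>)
  also have "\<dots> = (\<Prod>e\<in>A \<inter> {e. e \<in> R}. p) * (\<Prod>e\<in>A \<inter> - {e. e \<in> R}. 1)"
    by (rule prod.If_cases[OF fA])
  also have "A \<inter> {e. e \<in> R} = R" using R unfolding A_def by auto
  finally show ?thesis by simp
qed

lemma finite_k_factors: "finite (k_factors n k)"
  by (rule finite_subset[of _ "Pow (all_pairs n)"])
     (auto simp: k_factors_def is_k_factor_def finite_all_pairs)

lemma finite_set_gnp: "finite (set_pmf (gnp n p))"
proof -
  have "set_pmf (gnp n p) \<subseteq> Pow (all_pairs n)" unfolding gnp_def by auto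
  thus ?thesis by (rule finite_subset) (simp add: finite_all_pairs)
qed

lemma exp_half_le_2: "exp (1/2::real) \<le> 2"
proof -
  have "exp (1/2::real) * exp (1/2) = exp 1" by (simp flip: exp_add)
  also have "\<dots> \<le> 3" by (rule exp_le)
  finally have "exp (1/2::real) * exp (1/2) \<le> 2 * 2" by simp
  thus ?thesis by (metis mult_mono not_le exp_ge_zero linorder_not_le mult_strict_mono' zero_le_numeral)
qed

theorem mainTheorem3:
  fixes n k :: nat and lam eps :: real
    and Hstar :: "nat set set"
    and Hhat :: "nat set set \<Rightarrow> nat set set"
  assumes k_pos: "k \<ge> 1"
    and even: "even (k * n)"
    and p_range: "lam / real n \<in> {0..1}"
    and eps: "eps \<in> {0<..<1}"
    and lam_k: "lam * real k \<le> 1 + eps"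
    and Hstar: "Hstar \<in> k_factors n k"
    and estimator: "\<And>G. (\<exists>H\<in>k_factors n k. H \<subseteq> G) \<Longrightarrow> Hhat G \<in> k_factors n k \<and> Hhat G \<subseteq> G"
  defines "\<beta> \<equiv> max (4 * ln (1 + eps)) (sqrt (8 * ln (real n) / real n))"
  shows "measure_pmf.prob (gnp n (lam / real n))
            {G0. recon_loss Hstar (Hhat (G0 \<union> Hstar)) \<ge> 2 * \<beta>} \<le> exp (1/2) * \<beta>
       \<and> measure_pmf.expectation (gnp n (lam / real n))
            (\<lambda>G0. recon_loss Hstar (Hhat (G0 \<union> Hstar))) \<le> 6 * \<beta>"
proof -
  have Hs: "is_k_factor n k Hstar" using Hstar by (simp add: k_factors_def)
  have eps0: "0 < eps" using eps by simp
  have lpos: "0 < ln (1 + eps)" using eps0 by simp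
  have b1: "4 * ln (1 + eps) \<le> \<beta>" and b2: "sqrt (8 * ln (real n) / real n) \<le> \<beta>"
    unfolding \<beta>_def by auto
  have bpos: "0 < \<beta>" using b1 lpos by linarith
  define p where "p = lam / real n"
  have p01: "0 \<le> p" "p \<le> 1" using p_range unfolding p_def by auto
  define Ev where "Ev = {G0. recon_loss Hstar (Hhat (G0 \<union> Hstar)) \<ge> 2 * \<beta>}"
  have integ: "integrable (measure_pmf (gnp n p)) f" for f :: "nat set set \<Rightarrow> real"
    by (rule integrable_measure_pmf_finite[OF finite_set_gnp])
  have "n = 0 \<or> n = 1 \<or> n \<ge> 2" by linarith
  moreover {
    assume n0: "n = 0"
    have "Hstar = {}" using Hs n0 unfolding is_k_factor_def all_pairs_def by auto
    hence L0: "recon_loss Hstar X = 0" for X unfolding recon_loss_def by simp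
    have "Ev = {}" unfolding Ev_def L0 using bpos by auto
    hence P: "measure_pmf.prob (gnp n p) Ev \<le> exp (1/2) * \<beta>" using bpos by simp
    have "measure_pmf.expectation (gnp n p) (\<lambda>G0. recon_loss Hstar (Hhat (G0 \<union> Hstar))) = 0"
      unfolding L0 by simp
    hence "measure_pmf.prob (gnp n p) Ev \<le> exp (1/2) * \<beta> \<and>
       measure_pmf.expectation (gnp n p) (\<lambda>G0. recon_loss Hstar (Hhat (G0 \<union> Hstar))) \<le> 6 * \<beta>"
      using P bpos by simp
  }
  moreover {
    assume n1: "n = 1"
    have "all_pairs 1 = {}" unfolding all_pairs_def by auto
    hence "Hstar = {}" using Hs n1 unfolding is_k_factor_def by auto
    hence "k = 0" using Hs n1 unfolding is_k_factor_def by auto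
    hence False using k_pos by simp
  }
  moreover {
    assume n2: "n \<ge> 2"
    define a where "a = card Hstar"
    have a2: "2 * a = k * n" unfolding a_def by (rule kf_card[OF Hs])
    have apos: "0 < a" using a2 n2 k_pos by (metis gr0I mult_is_0 not_one_le_zero le_0_eq zero_neq_numeral)
    have HsA: "Hstar \<subseteq> all_pairs n" using Hs unfolding is_k_factor_def by auto
    have fHs: "finite Hstar" using HsA finite_all_pairs finite_subset by blast
    have c: "2 * real a * p \<le> 1 + eps"
    proof -
      have "2 * real a * p = real (2 * a) * lam / real n" unfolding p_def by simp
      also have "\<dots> = real k * lam" using a2 n2 by (simp add: field_simps)
      finally show ?thesis using lam_k by (simp add: mult.commute)
    qed
    have hat: "Hhat (G0 \<union> Hstar) \<in> k_factors n k \<and> Hhat (G0 \<union> Hstar) \<subseteq> G0 \<union> Hstar" for G0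
      by (rule estimator) (use Hstar in blast)
    have loss_eq: "recon_loss Hstar H = 2 * real (card (H - Hstar)) / real a"
      if H: "H \<in> k_factors n k" for H
    proof -
      have Hk: "is_k_factor n k H" using H by (simp add: k_factors_def)
      have fH: "finite H" using Hk finite_all_pairs finite_subset unfolding is_k_factor_def by blast
      have "card (sym_diff Hstar H) = card (Hstar - H) + card (H - Hstar)"
        by (rule card_Un_disjoint) (use fH fHs in auto)
      also have "\<dots> = 2 * card (H - Hstar)" using kf_card_diff[OF Hk Hs] by simp
      finally show ?thesis unfolding recon_loss_def a_def by simp
    qed
    have m_le: "card (H - Hstar) \<le> a" if H: "H \<in> k_factors n k" for H
    proof -
      have Hk: "is_k_factor n k H" using H by (simp add: k_factors_def)
      have "card (H - Hstar) = card (Hstar - H)" by (rule kf_card_diff[OF Hk Hs])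
      also have "\<dots> \<le> a" unfolding a_def using fHs by (intro card_mono) auto
      finally show ?thesis .
    qed
    have P: "measure_pmf.prob (gnp n p) Ev \<le> exp (1/2) * \<beta>"
    proof (cases "1 \<le> exp (1/2) * \<beta>")
      case True
      thus ?thesis using measure_pmf.prob_le_1[of "gnp n p" Ev] by linarith
    next
      case False
      have "1 \<le> exp (1/2::real)" by simp
      hence "1 * \<beta> \<le> exp (1/2) * \<beta>" using bpos by (intro mult_right_mono) auto
      hence b3: "\<beta> < 1" using False by linarith
      define Bad where "Bad = {H\<in>k_factors n k. \<beta> * real a \<le> real (card (H - Hstar))}"
      have fBad: "finite Bad" unfolding Bad_def using finite_k_factors by simp
      have sub: "Ev \<subseteq> (\<Union>H\<in>Bad. {G. H - Hstar \<subseteq> G})"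
      proof
        fix G0 assume "G0 \<in> Ev"
        hence ge: "2 * \<beta> \<le> recon_loss Hstar (Hhat (G0 \<union> Hstar))" unfolding Ev_def by simp
        define H where "H = Hhat (G0 \<union> Hstar)"
        have H: "H \<in> k_factors n k" "H \<subseteq> G0 \<union> Hstar" using hat[of G0] unfolding H_def by auto
        have "2 * \<beta> \<le> 2 * real (card (H - Hstar)) / real a" using ge loss_eq[OF H(1)] unfolding H_def by simp
        hence "\<beta> * real a \<le> real (card (H - Hstar))" using apos by (simp add: field_simps)
        hence "H \<in> Bad" unfolding Bad_def using H by simp
        moreover have "H - Hstar \<subseteq> G0" using H by auto
        ultimately show "G0 \<in> (\<Union>H\<in>Bad. {G. H - Hstar \<subseteq> G})" by blast
      qed
      have "measure_pmf.prob (gnp n p) Ev \<le> measure_pmf.prob (gnp n p) (\<Union>H\<in>Bad. {G. H - Hstar \<subseteq> G})"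
        by (rule measure_pmf.finite_measure_mono[OF sub]) simp
      also have "\<dots> \<le> (\<Sum>H\<in>Bad. measure_pmf.prob (gnp n p) {G. H - Hstar \<subseteq> G})"
        by (rule measure_pmf.finite_measure_subadditive_finite[OF fBad]) simp
      also have "\<dots> = (\<Sum>H\<in>Bad. p ^ card (H - Hstar))"
      proof (rule sum.cong[OF refl])
        fix H assume "H \<in> Bad"
        hence "H - Hstar \<subseteq> all_pairs n" unfolding Bad_def k_factors_def is_k_factor_def by auto
        thus "measure_pmf.prob (gnp n p) {G. H - Hstar \<subseteq> G} = p ^ card (H - Hstar)"
          by (rule prob_subset[OF _ p01])
      qed
      also have "\<dots> = (\<Sum>m\<in>{m. m \<le> a \<and> \<beta> * real a \<le> real m}.
                         \<Sum>H\<in>{H. H \<in> Bad \<and> card (H - Hstar) = m}. p ^ card (H - Hstar))"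
      proof (rule sum.group[symmetric, OF fBad])
        show "finite {m. m \<le> a \<and> \<beta> * real a \<le> real m}" by (rule finite_subset[of _ "{..a}"]) auto
        show "(\<lambda>H. card (H - Hstar)) ` Bad \<subseteq> {m. m \<le> a \<and> \<beta> * real a \<le> real m}"
          using m_le unfolding Bad_def by auto
      qed
      also have "\<dots> \<le> (\<Sum>m\<in>{m. m \<le> a \<and> \<beta> * real a \<le> real m}. real (a choose m) * real (dfact m) * p^m)"
      proof (rule sum_mono)
        fix m assume "m \<in> {m. m \<le> a \<and> \<beta> * real a \<le> real m}"
        have "(\<Sum>H\<in>{H. H \<in> Bad \<and> card (H - Hstar) = m}. p ^ card (H - Hstar))
            = (\<Sum>H\<in>{H. H \<in> Bad \<and> card (H - Hstar) = m}. p ^ m)" by (rule sum.cong) auto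
        also have "\<dots> = real (card {H. H \<in> Bad \<and> card (H - Hstar) = m}) * p ^ m" by simp
        also have "\<dots> \<le> real (card {H\<in>k_factors n k. card (H - Hstar) = m}) * p ^ m"
        proof (rule mult_right_mono)
          have "card {H. H \<in> Bad \<and> card (H - Hstar) = m} \<le> card {H\<in>k_factors n k. card (H - Hstar) = m}"
            by (rule card_mono) (use finite_k_factors in \<open>auto simp: Bad_def\<close>)
          thus "real (card {H. H \<in> Bad \<and> card (H - Hstar) = m}) \<le> real (card {H\<in>k_factors n k. card (H - Hstar) = m})"
            by simp
        qed (use p01 in simp)
        also have "\<dots> \<le> real ((a choose m) * dfact m) * p ^ m"
        proof (rule mult_right_mono)
          show "real (card {H\<in>k_factors n k. card (H - Hstar) = m}) \<le> real ((a choose m) * dfact m)"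
            using card_KF[OF Hs, of m] unfolding a_def by (simp only: of_nat_le_iff)
        qed (use p01 in simp)
        finally show "(\<Sum>H\<in>{H. H \<in> Bad \<and> card (H - Hstar) = m}. p ^ card (H - Hstar))
            \<le> real (a choose m) * real (dfact m) * p^m" by simp
      qed
      also have "\<dots> \<le> exp (1/2) * \<beta>"
        by (rule sum_bound[OF n2 k_pos a2 p01(1) c eps0 b1 b2 b3])
      finally show ?thesis .
    qed
    have pw: "recon_loss Hstar (Hhat (G0 \<union> Hstar)) \<le> 2 * \<beta> + 2 * indicator Ev G0" for G0
    proof (cases "G0 \<in> Ev")
      case True
      define H where "H = Hhat (G0 \<union> Hstar)"
      have H: "H \<in> k_factors n k" using hat[of G0] unfolding H_def by auto
      have "recon_loss Hstar H = 2 * real (card (H - Hstar)) / real a" by (rule loss_eq[OF H])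
      also have "\<dots> \<le> 2 * real a / real a" using m_le[OF H] apos by (intro divide_right_mono) auto
      also have "\<dots> = 2" using apos by simp
      finally show ?thesis using True bpos unfolding H_def by simp
    next
      case False
      thus ?thesis unfolding Ev_def by simp
    qed
    have "measure_pmf.expectation (gnp n p) (\<lambda>G0. recon_loss Hstar (Hhat (G0 \<union> Hstar)))
        \<le> measure_pmf.expectation (gnp n p) (\<lambda>G0. 2 * \<beta> + 2 * indicator Ev G0)"
      by (rule integral_mono[OF integ integ pw])
    also have "\<dots> = 2 * \<beta> + 2 * measure_pmf.prob (gnp n p) Ev"
      using integ by (simp add: measure_pmf.prob_space)
    also have "\<dots> \<le> 2 * \<beta> + 2 * (exp (1/2) * \<beta>)" using P by simp
    also have "\<dots> \<le> 2 * \<beta> + 2 * (2 * \<beta>)" using exp_half_le_2 bpos by (simp add: mult_right_mono)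
    finally have "measure_pmf.prob (gnp n p) Ev \<le> exp (1/2) * \<beta> \<and>
       measure_pmf.expectation (gnp n p) (\<lambda>G0. recon_loss Hstar (Hhat (G0 \<union> Hstar))) \<le> 6 * \<beta>"
      using P by simp
  }
  ultimately show ?thesis unfolding Ev_def p_def by blast
qed

end
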